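(* Let $d\ge1$, $\alpha_i\in(0,1/i]$ for all $i\in[d+1]$, $P=\mathbb Z_{\ge0}^{d+1}$, and let $t>\exp^{(5d+4)}(1)$ be an integer. Fix reals $a_u$ ($u\in L_t$) and extend them by $a_v:=\sum_{u\in L_t}p(v\to u)a_u$ for $v\in L_m$, $0\le m\le t$. For $j\in[d+1]$ let $\lambda_j:=\lfloor\log^{(2d+2-2j)}(t)\rfloor$ and for $i\in[d+1]$ let $S_j^{\ge i}$ be the set of elements of $L_{\lambda_j}$ with at least $i$ positive entries. Then for all $i,j_1,j_2\in[d+1]$ with $j_1<j_2$, $$\sum_{u\in S_{j_1}^{\ge i}}|a_u|\le\sum_{u\in S_{j_2}^{\ge i}}|a_u|.$$
   Context: Finite model: $P=\mathbb{Z}_{\ge0}^{d+1}$ with $u\le v$ iff $v-u\in\mathbb{Z}_{\ge0}^{d+1}$; $L_t$ = tuples with coordinate sum $t$; $\mathfrak p(v)$ = set of elements covered by $v$, so $|\mathfrak p(v)|$ is the number of positive coordinates of $v$. Path weights: each covering pair $u\lessdot v$ gives a directed edge $u\to v$ of weight $\alpha_{|\mathfrak p(v)|}$; $p(u\to v)$ is the sum over all directed paths from $u$ to $v$ of the product of edge weights, with $p(v\to v)=1$ and $p(u\to v)=0$ if $u\not\le v$. Notation: $\log^{(k)}$ and $\exp^{(k)}$ denote $k$-fold iterates ($\log^{(0)}$ is the identity). *)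

theory Defs
  imports Complex_Main
begin

text \<open>Elements of P = Z_{>=0}^{d+1} are represented as functions v :: nat => nat
  with coordinates 0..d and v i = 0 for i > d.\<close>

definition level :: "nat \<Rightarrow> nat \<Rightarrow> (nat \<Rightarrow> nat) set" where
  "level d t = {v. (\<forall>i. d < i \<longrightarrow> v i = 0) \<and> (\<Sum>i\<le>d. v i) = t}"

definition npos :: "nat \<Rightarrow> (nat \<Rightarrow> nat) \<Rightarrow> nat" where
  "npos d v = card {i. i \<le> d \<and> 0 < v i}"

definition endpt :: "(nat \<Rightarrow> nat) \<Rightarrow> nat list \<Rightarrow> (nat \<Rightarrow> nat)" where
  "endpt u xs = (\<lambda>i. u i + count_list xs i)"

text \<open>Directed paths from u to v in the Hasse diagram (covering edges u -> u + e_i)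
  correspond bijectively to lists of coordinate indices; the edge into w has weight
  alpha (npos w).  p u v is the total weight of all such paths (empty path: weight 1).\<close>
definition pathw :: "nat \<Rightarrow> (nat \<Rightarrow> real) \<Rightarrow> (nat \<Rightarrow> nat) \<Rightarrow> (nat \<Rightarrow> nat) \<Rightarrow> real" where
  "pathw d \<alpha> u v =
     (\<Sum>xs \<in> {xs. length xs = (\<Sum>i\<le>d. v i) - (\<Sum>i\<le>d. u i) \<and> set xs \<subseteq> {..d} \<and> endpt u xs = v}.
        \<Prod>k<length xs. \<alpha> (npos d (endpt u (take (Suc k) xs))))"

definition ext_val :: "nat \<Rightarrow> (nat \<Rightarrow> real) \<Rightarrow> nat \<Rightarrow> ((nat \<Rightarrow> nat) \<Rightarrow> real) \<Rightarrow> (nat \<Rightarrow> nat) \<Rightarrow> real" where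
  "ext_val d \<alpha> t a v = (\<Sum>u\<in>level d t. pathw d \<alpha> v u * a u)"

definition lam :: "nat \<Rightarrow> nat \<Rightarrow> nat \<Rightarrow> nat" where
  "lam d t j = nat \<lfloor>(ln ^^ (2*d + 2 - 2*j)) (real t)\<rfloor>"

definition Sge :: "nat \<Rightarrow> nat \<Rightarrow> nat \<Rightarrow> nat \<Rightarrow> (nat \<Rightarrow> nat) set" where
  "Sge d t j i = {v \<in> level d (lam d t j). i \<le> npos d v}"

end

theory Submission
  imports Defs
begin

lemma iter_ln_gt:
  fixes x :: real
  assumes "k \<le> N" "x > (exp ^^ N) 1"
  shows "(ln ^^ k) x > (exp ^^ (N - k)) 1"
  using assms(1)
proof (induction k)
  case 0 then show ?case using assms(2) by simp
next
  case (Suc k)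
  have e: "N - k = Suc (N - Suc k)" using Suc.prems by simp
  have pos: "0 < (exp ^^ (N - Suc k)) (1::real)"
    by (cases "N - Suc k") auto
  have "(ln ^^ k) x > exp ((exp ^^ (N - Suc k)) 1)" using Suc by (simp add: e)
  moreover have "0 < (ln ^^ k) x" using calculation exp_gt_zero less_trans by blast
  ultimately have "ln ((ln ^^ k) x) > ln (exp ((exp ^^ (N - Suc k)) 1))"
    by (subst ln_less_cancel_iff) auto
  thus ?case by simp
qed

lemma iter_ln_pos:
  fixes x :: real
  assumes "k \<le> N" "x > (exp ^^ N) 1"
  shows "(ln ^^ k) x > 0"
proof -
  have "0 < (exp ^^ (N - k)) (1::real)" by (cases "N - k") auto
  thus ?thesis using iter_ln_gt[OF assms] by linarith
qed

lemma iter_ln_mono: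
  fixes x :: real
  assumes "k2 \<le> k1" "k1 \<le> N" "x > (exp ^^ N) 1"
  shows "(ln ^^ k1) x \<le> (ln ^^ k2) x"
  using assms(1,2)
proof (induction k1 rule: dec_induct)
  case base then show ?case by simp
next
  case (step k)
  have "(ln ^^ k) x > 0" using iter_ln_pos[of k N x] step assms by simp
  hence "ln ((ln ^^ k) x) \<le> (ln ^^ k) x" using ln_less_self less_imp_le by blast
  thus ?case using step by simp
qed

lemma finite_level: "finite (level d m)"
proof -
  have "level d m \<subseteq> {f. \<forall>x. (x \<in> {..d} \<longrightarrow> f x \<in> {..m}) \<and> (x \<notin> {..d} \<longrightarrow> f x = 0)}"
  proof
    fix v assume v: "v \<in> level d m"
    have "\<And>x. x \<le> d \<Longrightarrow> v x \<le> m"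
    proof -
      fix x assume "x \<le> d"
      hence "v x \<le> (\<Sum>i\<le>d. v i)" by (intro member_le_sum) auto
      thus "v x \<le> m" using v by (simp add: level_def)
    qed
    thus "v \<in> {f. \<forall>x. (x \<in> {..d} \<longrightarrow> f x \<in> {..m}) \<and> (x \<notin> {..d} \<longrightarrow> f x = 0)}" using v by (auto simp: level_def)
  qed
  thus ?thesis by (rule finite_subset) (intro finite_set_of_finite_funs; simp)
qed

definition XS where "XS d v u = {xs. length xs = (\<Sum>i\<le>d. u i) - (\<Sum>i\<le>d. v i) \<and> set xs \<subseteq> {..d} \<and> endpt v xs = u}"

lemma finite_XS: "finite (XS d v u)"
  by (rule finite_subset[OF _ finite_lists_length_eq[of "{..d}" "(\<Sum>i\<le>d. u i) - (\<Sum>i\<le>d. v i)"]])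
     (auto simp: XS_def)

lemma endpt_Cons: "endpt v (k # ys) = endpt (v(k := Suc (v k))) ys"
  by (auto simp: endpt_def fun_eq_iff)

lemma endpt_Nil[simp]: "endpt v [] = v"
  by (simp add: endpt_def)

lemma sum_upd: fixes v :: "nat \<Rightarrow> nat" shows "k \<le> d \<Longrightarrow> (\<Sum>i\<le>d. (v(k := Suc (v k))) i) = Suc (\<Sum>i\<le>d. v i)"
proof -
  assume k: "k \<le> d"
  have "(\<Sum>i\<le>d. (v(k := Suc (v k))) i) = (\<Sum>i\<le>d. v i + (if i = k then 1 else 0))"
    by (intro sum.cong) auto
  also have "\<dots> = (\<Sum>i\<le>d. v i) + (\<Sum>i\<le>d. if i = k then 1 else 0)" by (simp add: sum.distrib)
  also have "(\<Sum>i\<le>d. if i = k then 1 else 0::nat) = 1" using k by (simp add: sum.If_cases)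
  finally show ?thesis by simp
qed

lemma XS_split:
  assumes "(\<Sum>i\<le>d. v i) < (\<Sum>i\<le>d. u i)"
  shows "XS d v u = (\<Union>k\<in>{..d}. (Cons k) ` XS d (v(k := Suc (v k))) u)"
proof
  show "XS d v u \<subseteq> (\<Union>k\<in>{..d}. (Cons k) ` XS d (v(k := Suc (v k))) u)"
  proof
    fix xs assume xs: "xs \<in> XS d v u"
    then obtain k ys where kys: "xs = k # ys" using assms by (cases xs) (auto simp: XS_def)
    have k: "k \<le> d" using xs kys by (auto simp: XS_def)
    have s: "(\<Sum>i\<le>d. (v(k := Suc (v k))) i) = Suc (\<Sum>i\<le>d. v i)" using sum_upd k by blast
    have "ys \<in> XS d (v(k := Suc (v k))) u"
      using xs kys k s unfolding XS_def by (simp add: endpt_Cons del: fun_upd_apply, linarith)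
    thus "xs \<in> (\<Union>k\<in>{..d}. (Cons k) ` XS d (v(k := Suc (v k))) u)" using k kys by auto
  qed
next
  show "(\<Union>k\<in>{..d}. (Cons k) ` XS d (v(k := Suc (v k))) u) \<subseteq> XS d v u"
  proof
    fix xs assume "xs \<in> (\<Union>k\<in>{..d}. (Cons k) ` XS d (v(k := Suc (v k))) u)"
    then obtain k ys where k: "k \<le> d" and ys: "ys \<in> XS d (v(k := Suc (v k))) u" and xs: "xs = k # ys" by auto
    have s: "(\<Sum>i\<le>d. (v(k := Suc (v k))) i) = Suc (\<Sum>i\<le>d. v i)" using sum_upd k by blast
    show "xs \<in> XS d v u"
      using xs k s ys assms unfolding XS_def by (simp add: endpt_Cons del: fun_upd_apply)
  qed
qed

lemma pathw_XS: "pathw d \<alpha> v u = (\<Sum>xs\<in>XS d v u. \<Prod>k<length xs. \<alpha> (npos d (endpt v (take (Suc k) xs))))"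
  by (simp add: pathw_def XS_def)

lemma pathw_step:
  assumes "(\<Sum>i\<le>d. v i) < (\<Sum>i\<le>d. u i)"
  shows "pathw d \<alpha> v u = (\<Sum>k\<le>d. \<alpha> (npos d (v(k := Suc (v k)))) * pathw d \<alpha> (v(k := Suc (v k))) u)"
proof -
  let ?f = "\<lambda>v xs. \<Prod>k<length xs. \<alpha> (npos d (endpt v (take (Suc k) xs)))"
  have "pathw d \<alpha> v u = (\<Sum>xs\<in>(\<Union>k\<in>{..d}. (Cons k) ` XS d (v(k := Suc (v k))) u). ?f v xs)"
    by (simp add: pathw_XS XS_split[OF assms])
  also have "\<dots> = (\<Sum>k\<le>d. \<Sum>xs\<in>(Cons k) ` XS d (v(k := Suc (v k))) u. ?f v xs)"
    by (rule sum.UNION_disjoint) (auto simp: finite_XS)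
  also have "\<dots> = (\<Sum>k\<le>d. \<Sum>ys\<in>XS d (v(k := Suc (v k))) u. ?f v (k # ys))"
  proof (rule sum.cong[OF refl])
    fix k
    show "(\<Sum>xs\<in>(Cons k) ` XS d (v(k := Suc (v k))) u. ?f v xs) = (\<Sum>ys\<in>XS d (v(k := Suc (v k))) u. ?f v (k # ys))"
      by (subst sum.reindex) (auto simp: inj_on_def)
  qed
  also have "\<dots> = (\<Sum>k\<le>d. \<alpha> (npos d (v(k := Suc (v k)))) * pathw d \<alpha> (v(k := Suc (v k))) u)"
  proof (intro sum.cong refl)
    fix k
    have "?f v (k # ys) = \<alpha> (npos d (v(k := Suc (v k)))) * ?f (v(k := Suc (v k))) ys" for ys
      by (simp only: length_Cons prod.lessThan_Suc_shift) (simp add: endpt_Cons endpt_Nil del: fun_upd_apply)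
    thus "(\<Sum>ys\<in>XS d (v(k := Suc (v k))) u. ?f v (k # ys)) = \<alpha> (npos d (v(k := Suc (v k)))) * pathw d \<alpha> (v(k := Suc (v k))) u"
      by (simp add: pathw_XS sum_distrib_left)
  qed
  finally show ?thesis .
qed

lemma level_up: "v \<in> level d m \<Longrightarrow> k \<le> d \<Longrightarrow> v(k := Suc (v k)) \<in> level d (Suc m)"
  using sum_upd[of k d v] by (auto simp: level_def)

lemma ext_step:
  assumes "v \<in> level d m" "m < t"
  shows "ext_val d \<alpha> t a v = (\<Sum>k\<le>d. \<alpha> (npos d (v(k := Suc (v k)))) * ext_val d \<alpha> t a (v(k := Suc (v k))))"
proof -
  have "ext_val d \<alpha> t a v = (\<Sum>u\<in>level d t. (\<Sum>k\<le>d. \<alpha> (npos d (v(k := Suc (v k)))) * pathw d \<alpha> (v(k := Suc (v k))) u) * a u)"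
    unfolding ext_val_def
  proof (rule sum.cong[OF refl])
    fix u assume "u \<in> level d t"
    hence "(\<Sum>i\<le>d. v i) < (\<Sum>i\<le>d. u i)" using assms by (simp add: level_def)
    thus "pathw d \<alpha> v u * a u = (\<Sum>k\<le>d. \<alpha> (npos d (v(k := Suc (v k)))) * pathw d \<alpha> (v(k := Suc (v k))) u) * a u"
      by (simp add: pathw_step)
  qed
  also have "\<dots> = (\<Sum>u\<in>level d t. \<Sum>k\<le>d. \<alpha> (npos d (v(k := Suc (v k)))) * (pathw d \<alpha> (v(k := Suc (v k))) u * a u))"
    by (simp add: sum_distrib_right mult.assoc)
  also have "\<dots> = (\<Sum>k\<le>d. \<Sum>u\<in>level d t. \<alpha> (npos d (v(k := Suc (v k)))) * (pathw d \<alpha> (v(k := Suc (v k))) u * a u))"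
    by (rule sum.swap)
  also have "\<dots> = (\<Sum>k\<le>d. \<alpha> (npos d (v(k := Suc (v k)))) * ext_val d \<alpha> t a (v(k := Suc (v k))))"
    by (simp add: ext_val_def sum_distrib_left)
  finally show ?thesis .
qed

lemma npos_mono_up: "npos d v \<le> npos d (v(k := Suc (v k)))"
  unfolding npos_def by (rule card_mono) auto

lemma npos_le: "npos d w \<le> d + 1"
proof -
  have "npos d w \<le> card {..d}" unfolding npos_def by (rule card_mono) auto
  thus ?thesis by simp
qed

lemma npos_pos: "w \<in> level d (Suc m) \<Longrightarrow> 1 \<le> npos d w"
proof -
  assume w: "w \<in> level d (Suc m)"
  have "\<exists>i\<le>d. 0 < w i"
  proof (rule ccontr)
    assume "\<not> ?thesis"
    hence "(\<Sum>i\<le>d. w i) = 0" by simp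
    thus False using w by (simp add: level_def)
  qed
  then obtain i where "i \<le> d" "0 < w i" by blast
  hence "{i. i \<le> d \<and> 0 < w i} \<noteq> {}" by blast
  thus ?thesis unfolding npos_def by (simp add: Suc_le_eq card_gt_0_iff)
qed

lemma one_step:
  assumes alpha: "\<forall>i\<in>{1..d+1}. 0 < \<alpha> i \<and> \<alpha> i \<le> 1 / real i"
    and mt: "m < t"
  shows "(\<Sum>v\<in>{v\<in>level d m. i \<le> npos d v}. \<bar>ext_val d \<alpha> t a v\<bar>)
       \<le> (\<Sum>w\<in>{w\<in>level d (Suc m). i \<le> npos d w}. \<bar>ext_val d \<alpha> t a w\<bar>)"
proof -
  define A where "A = {v\<in>level d m. i \<le> npos d v}"
  define B where "B = {w\<in>level d (Suc m). i \<le> npos d w}"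
  define E where "E = ext_val d \<alpha> t a"
  define G where "G = (\<lambda>w. \<alpha> (npos d w) * \<bar>E w\<bar>)"
  define up where "up = (\<lambda>(v::nat\<Rightarrow>nat) k. v(k := Suc (v k)))"
  have finA: "finite A" unfolding A_def using finite_level by simp
  have finB: "finite B" unfolding B_def using finite_level by simp
  have Gpos: "w \<in> level d (Suc m) \<Longrightarrow> 0 \<le> G w" for w
  proof -
    assume "w \<in> level d (Suc m)"
    hence "npos d w \<in> {1..d+1}" using npos_pos npos_le by auto
    hence "0 < \<alpha> (npos d w)" using alpha by blast
    thus ?thesis unfolding G_def by simp
  qed
  have GB: "w \<in> B \<Longrightarrow> real (npos d w) * G w \<le> \<bar>E w\<bar>" for w
  proof -
    assume "w \<in> B"
    hence "npos d w \<in> {1..d+1}" using npos_pos npos_le by (auto simp: B_def)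
    hence al: "0 < \<alpha> (npos d w)" "\<alpha> (npos d w) \<le> 1 / real (npos d w)" and np: "1 \<le> npos d w" using alpha by auto
    have "real (npos d w) * \<alpha> (npos d w) \<le> 1"
      using al np by (simp add: field_simps)
    hence "real (npos d w) * \<alpha> (npos d w) * \<bar>E w\<bar> \<le> 1 * \<bar>E w\<bar>"
      by (intro mult_right_mono) auto
    thus ?thesis unfolding G_def by (simp add: mult.assoc)
  qed
  have "(\<Sum>v\<in>A. \<bar>E v\<bar>) \<le> (\<Sum>v\<in>A. \<Sum>k\<le>d. G (up v k))"
  proof (rule sum_mono)
    fix v assume v: "v \<in> A"
    hence vl: "v \<in> level d m" by (simp add: A_def)
    have "\<bar>E v\<bar> = \<bar>\<Sum>k\<le>d. \<alpha> (npos d (up v k)) * E (up v k)\<bar>"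
      using ext_step[OF vl mt] by (simp add: E_def up_def)
    also have "\<dots> \<le> (\<Sum>k\<le>d. \<bar>\<alpha> (npos d (up v k)) * E (up v k)\<bar>)" by (rule sum_abs)
    also have "\<dots> = (\<Sum>k\<le>d. G (up v k))"
    proof (rule sum.cong[OF refl])
      fix k assume "k \<in> {..d}"
      hence "up v k \<in> level d (Suc m)" using level_up vl by (simp add: up_def)
      hence "npos d (up v k) \<in> {1..d+1}" using npos_pos npos_le by auto
      hence "0 < \<alpha> (npos d (up v k))" using alpha by blast
      thus "\<bar>\<alpha> (npos d (up v k)) * E (up v k)\<bar> = G (up v k)" by (simp add: G_def abs_mult)
    qed
    finally show "\<bar>E v\<bar> \<le> (\<Sum>k\<le>d. G (up v k))" .
  qed
  also have "\<dots> = (\<Sum>(v,k)\<in>A \<times> {..d}. G (up v k))"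
    by (rule sum.cartesian_product)
  also have "\<dots> = (\<Sum>q\<in>(\<lambda>p. (up (fst p) (snd p), snd p)) ` (A \<times> {..d}). G (fst q))"
  proof (subst sum.reindex)
    show "inj_on (\<lambda>p. (up (fst p) (snd p), snd p)) (A \<times> {..d})"
    proof (rule inj_onI)
      fix p q assume "p \<in> A \<times> {..d}" "q \<in> A \<times> {..d}"
        and eq: "(up (fst p) (snd p), snd p) = (up (fst q) (snd q), snd q)"
      obtain v k where p: "p = (v, k)" by (cases p)
      obtain v' k' where q: "q = (v', k')" by (cases q)
      have kk: "k' = k" using eq p q by simp
      have "v(k := Suc (v k)) = v'(k := Suc (v' k))" using eq p q kk by (simp add: up_def)
      hence "v = v'"
      proof -
        assume h: "v(k := Suc (v k)) = v'(k := Suc (v' k))"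
        show "v = v'"
        proof
          fix x
          have "(v(k := Suc (v k))) x = (v'(k := Suc (v' k))) x" using h by simp
          thus "v x = v' x" by (cases "x = k") auto
        qed
      qed
      thus "p = q" using p q kk by simp
    qed
  qed (rule sum.cong, auto)
  also have "\<dots> \<le> (\<Sum>q\<in>Sigma B (\<lambda>w. {k\<in>{..d}. 0 < w k}). G (fst q))"
  proof (rule sum_mono2)
    show "finite (Sigma B (\<lambda>w. {k\<in>{..d}. 0 < w k}))" using finB by auto
    show "(\<lambda>p. (up (fst p) (snd p), snd p)) ` (A \<times> {..d}) \<subseteq> Sigma B (\<lambda>w. {k\<in>{..d}. 0 < w k})"
    proof
      fix q assume "q \<in> (\<lambda>p. (up (fst p) (snd p), snd p)) ` (A \<times> {..d})"
      then obtain v k where v: "v \<in> A" and k: "k \<le> d" and q: "q = (up v k, k)" by auto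
      have "up v k \<in> level d (Suc m)" using level_up v k by (simp add: up_def A_def)
      moreover have "i \<le> npos d (up v k)" using v npos_mono_up[of d v k] by (simp add: A_def up_def)
      ultimately show "q \<in> Sigma B (\<lambda>w. {k\<in>{..d}. 0 < w k})" using q k by (simp add: B_def up_def)
    qed
    show "\<And>q. q \<in> Sigma B (\<lambda>w. {k\<in>{..d}. 0 < w k}) - (\<lambda>p. (up (fst p) (snd p), snd p)) ` (A \<times> {..d}) \<Longrightarrow> 0 \<le> G (fst q)"
      using Gpos by (auto simp: B_def)
  qed
  also have "\<dots> = (\<Sum>w\<in>B. \<Sum>k\<in>{k\<in>{..d}. 0 < w k}. G w)"
  proof -
    have "(\<Sum>q\<in>Sigma B (\<lambda>w. {k\<in>{..d}. 0 < w k}). G (fst q)) = (\<Sum>(w,k)\<in>Sigma B (\<lambda>w. {k\<in>{..d}. 0 < w k}). G w)"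
      by (rule sum.cong) auto
    also have "\<dots> = (\<Sum>w\<in>B. \<Sum>k\<in>{k\<in>{..d}. 0 < w k}. G w)"
      by (rule sum.Sigma[symmetric]) (use finB in auto)
    finally show ?thesis .
  qed
  also have "\<dots> = (\<Sum>w\<in>B. real (npos d w) * G w)"
  proof (rule sum.cong[OF refl])
    fix w :: "nat \<Rightarrow> nat"
    have "{k\<in>{..d}. 0 < w k} = {k. k \<le> d \<and> 0 < w k}" by auto
    thus "(\<Sum>k\<in>{k\<in>{..d}. 0 < w k}. G w) = real (npos d w) * G w" by (simp add: npos_def)
  qed
  also have "\<dots> \<le> (\<Sum>w\<in>B. \<bar>E w\<bar>)" by (rule sum_mono) (rule GB)
  finally show ?thesis by (simp add: A_def B_def E_def)
qed

lemma chain: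
  assumes alpha: "\<forall>i\<in>{1..d+1}. 0 < \<alpha> i \<and> \<alpha> i \<le> 1 / real i"
    and "m \<le> m'" "m' \<le> t"
  shows "(\<Sum>v\<in>{v\<in>level d m. i \<le> npos d v}. \<bar>ext_val d \<alpha> t a v\<bar>)
       \<le> (\<Sum>w\<in>{w\<in>level d m'. i \<le> npos d w}. \<bar>ext_val d \<alpha> t a w\<bar>)"
  using assms(2,3)
proof (induction m' rule: dec_induct)
  case base then show ?case by simp
next
  case (step k)
  have "k < t" using step by simp
  from one_step[OF alpha this, where i=i and a=a] step show ?case by linarith
qed

theorem mainTheorem9:
  fixes d t :: nat and \<alpha> :: "nat \<Rightarrow> real" and a :: "(nat \<Rightarrow> nat) \<Rightarrow> real"
  assumes "1 \<le> d"
    and "\<forall>i\<in>{1..d+1}. 0 < \<alpha> i \<and> \<alpha> i \<le> 1 / real i"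
    and "real t > (exp ^^ (5*d + 4)) 1"
  shows "\<forall>i\<in>{1..d+1}. \<forall>j1\<in>{1..d+1}. \<forall>j2\<in>{1..d+1}. j1 < j2 \<longrightarrow>
           (\<Sum>u\<in>Sge d t j1 i. \<bar>ext_val d \<alpha> t a u\<bar>) \<le> (\<Sum>u\<in>Sge d t j2 i. \<bar>ext_val d \<alpha> t a u\<bar>)"
proof (intro ballI impI)
  fix i j1 j2 assume j1: "j1 \<in> {1..d+1}" and j2: "j2 \<in> {1..d+1}" and lt: "j1 < j2"
  define k1 where "k1 = 2*d + 2 - 2*j1"
  define k2 where "k2 = 2*d + 2 - 2*j2"
  have kk: "k2 \<le> k1" "k1 \<le> 5*d+4" using j1 j2 lt by (auto simp: k1_def k2_def)
  have "(ln ^^ k1) (real t) \<le> (ln ^^ k2) (real t)"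
    by (rule iter_ln_mono[OF kk assms(3)])
  hence l1: "lam d t j1 \<le> lam d t j2"
    unfolding lam_def k1_def[symmetric] k2_def[symmetric]
    by (intro nat_mono floor_mono)
  have "(ln ^^ k2) (real t) \<le> (ln ^^ 0) (real t)"
    by (rule iter_ln_mono[of 0 k2 "5*d+4"]) (use kk assms(3) in auto)
  hence "lam d t j2 \<le> nat \<lfloor>real t\<rfloor>"
    unfolding lam_def k2_def[symmetric]
    by (intro nat_mono floor_mono) simp
  hence l2: "lam d t j2 \<le> t" by simp
  show "(\<Sum>u\<in>Sge d t j1 i. \<bar>ext_val d \<alpha> t a u\<bar>) \<le> (\<Sum>u\<in>Sge d t j2 i. \<bar>ext_val d \<alpha> t a u\<bar>)"
    unfolding Sge_def by (rule chain[OF assms(2) l1 l2])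
qed

end
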